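(* Under the direct FIFO mechanism, when all drivers use the equilibrium strategy of Theorem 1 (accept all dispatches, join iff the queue length is at most $\bar Q$, never leave or move to the tail): if $\lambda>\sum_{i\in\mathcal L}\mu_i$, the steady-state queue length is $Q^*=\bar Q$, this is the unique steady-state length, all trips are completed, and every arriving driver has payoff $0$; if $\lambda\le\sum_{i\in\mathcal L}\mu_i$, then $Q^*=n_{j^*}$ is a steady-state queue length (unique when $\lambda\ne\sum_{j=1}^i\mu_j$ for all $i\in\mathcal L$), all trips to locations $i<j^*$ and $\lambda-\sum_{i<j^*}\mu_i$ units per unit time of trips to $j^*$ are completed, and every arriving driver has payoff $w_{j^*}$.
   Context: Model: continuous time, non-atomic, stationary; one origin with a queue. Destinations $\mathcal L=\{1,\dots,\ell\}$, rider arrival rates $\mu_i>0$, driver arrival rate $\lambda>0$, net earnings $w_1>\dots>w_\ell\ge0$ (0 for not joining or leaving without a rider), driver waiting cost $c>0$ per unit time. Queue positions $q\in[0,Q]$, $q=0$ head. Notation: $j^*=\max\{i\in\mathcal L:\lambda>\sum_{j<i}\mu_j\}$; $n_1=0$, $n_i=\sum_{j<i}(w_j-w_i)\mu_j/c$; $\bar Q=\sum_i w_i\mu_i/c$. Direct FIFO: when the queue length $Q\ge n_i$, a trip to $i$ is offered first to the driver at position $n_i$ and after each decline to the next driver further down the queue; when $Q<n_i$ it is not dispatched. A steady-state queue length is one at which the rate of drivers joining equals the rate of drivers dispatched from the queue. *)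

theory Defs
  imports "HOL-Analysis.Analysis"
begin

text \<open>Model parameters: destinations 1..l, rider arrival rates mu i, net earnings w i,
driver arrival rate lam, waiting cost c per unit time.\<close>

definition nthr :: "(nat \<Rightarrow> real) \<Rightarrow> (nat \<Rightarrow> real) \<Rightarrow> real \<Rightarrow> nat \<Rightarrow> real" where
  "nthr mu w c i = (\<Sum>j\<in>{1..<i}. (w j - w i) * mu j) / c"

definition Qbar :: "nat \<Rightarrow> (nat \<Rightarrow> real) \<Rightarrow> (nat \<Rightarrow> real) \<Rightarrow> real \<Rightarrow> real" where
  "Qbar l mu w c = (\<Sum>i\<in>{1..l}. w i * mu i) / c"

definition jstar :: "nat \<Rightarrow> (nat \<Rightarrow> real) \<Rightarrow> real \<Rightarrow> nat" where
  "jstar l mu lam = Max {i\<in>{1..l}. lam > (\<Sum>j\<in>{1..<i}. mu j)}"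

text \<open>Stationary flow profile under direct FIFO when all drivers use the equilibrium
strategy (accept every dispatch, join iff the queue length is at most Qbar, never leave or
move to the tail).  Q is the queue length, r the rate at which drivers join, and x i the
rate at which trips to i are dispatched (and completed).  A trip to i is dispatched iff
Q >= n_i; in the fluid steady state a queue sitting exactly at a threshold may dispatch
(resp. admit) only part of the flow, which is captured by the interval constraints.\<close>
definition steady_profile ::
  "nat \<Rightarrow> (nat \<Rightarrow> real) \<Rightarrow> (nat \<Rightarrow> real) \<Rightarrow> real \<Rightarrow> real \<Rightarrow> real \<Rightarrow> real \<Rightarrow> (nat \<Rightarrow> real) \<Rightarrow> bool" where
  "steady_profile l mu w lam c Q r x \<longleftrightarrow>
     0 \<le> Q \<and>
     (Q < Qbar l mu w c \<longrightarrow> r = lam) \<and>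
     (Q = Qbar l mu w c \<longrightarrow> 0 \<le> r \<and> r \<le> lam) \<and>
     (Q > Qbar l mu w c \<longrightarrow> r = 0) \<and>
     (\<forall>i\<in>{1..l}.
        (Q < nthr mu w c i \<longrightarrow> x i = 0) \<and>
        (Q > nthr mu w c i \<longrightarrow> x i = mu i) \<and>
        (Q = nthr mu w c i \<longrightarrow> 0 \<le> x i \<and> x i \<le> mu i)) \<and>
     r = (\<Sum>i\<in>{1..l}. x i)"

definition steady_length ::
  "nat \<Rightarrow> (nat \<Rightarrow> real) \<Rightarrow> (nat \<Rightarrow> real) \<Rightarrow> real \<Rightarrow> real \<Rightarrow> real \<Rightarrow> bool" where
  "steady_length l mu w lam c Q \<longleftrightarrow> (\<exists>r x. steady_profile l mu w lam c Q r x)"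

text \<open>Speed at which a driver at position q moves towards the head: the rate at which
drivers ahead of q (at positions n_i < q) are dispatched.\<close>
definition drift_speed ::
  "nat \<Rightarrow> (nat \<Rightarrow> real) \<Rightarrow> (nat \<Rightarrow> real) \<Rightarrow> real \<Rightarrow> (nat \<Rightarrow> real) \<Rightarrow> real \<Rightarrow> real" where
  "drift_speed l mu w c x q = (\<Sum>i\<in>{i\<in>{1..l}. nthr mu w c i < q}. x i)"

text \<open>Time needed to move from position Q (the tail) to position p.\<close>
definition travel_time ::
  "nat \<Rightarrow> (nat \<Rightarrow> real) \<Rightarrow> (nat \<Rightarrow> real) \<Rightarrow> real \<Rightarrow> (nat \<Rightarrow> real) \<Rightarrow> real \<Rightarrow> real \<Rightarrow> real" where
  "travel_time l mu w c x Q p = integral {p..Q} (\<lambda>q. 1 / drift_speed l mu w c x q)"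

text \<open>Every arriving driver has payoff pi: a driver who joins at the tail and is
dispatched the trip to i (at position n_i, possible iff x i > 0) gets
w_i - c * (waiting time); a driver who does not join (possible iff r < lam) gets 0.\<close>
definition all_payoff ::
  "nat \<Rightarrow> (nat \<Rightarrow> real) \<Rightarrow> (nat \<Rightarrow> real) \<Rightarrow> real \<Rightarrow> real \<Rightarrow> real \<Rightarrow> real \<Rightarrow> (nat \<Rightarrow> real) \<Rightarrow> real \<Rightarrow> bool" where
  "all_payoff l mu w lam c Q r x pay \<longleftrightarrow>
     (\<forall>i\<in>{1..l}. 0 < x i \<longrightarrow> w i - c * travel_time l mu w c x Q (nthr mu w c i) = pay) \<and>
     (r < lam \<longrightarrow> pay = 0)"

end

theory Submission
  imports Defs
begin

lemma piecewise_integral: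
  fixes t v :: "nat \<Rightarrow> real" and f :: "real \<Rightarrow> real"
  assumes "i \<le> J" and mono: "\<forall>k. i \<le> k \<longrightarrow> k < J \<longrightarrow> t k \<le> t (Suc k)"
    and pc: "\<forall>k q. i \<le> k \<longrightarrow> k < J \<longrightarrow> t k < q \<longrightarrow> q \<le> t (Suc k) \<longrightarrow> f q = v k"
  shows "t i \<le> t J \<and> (f has_integral (\<Sum>k\<in>{i..<J}. (t (Suc k) - t k) * v k)) {t i..t J}"
  using assms(1)
proof (induction J rule: dec_induct)
  case base
  then show ?case by (simp add: has_integral_refl)
next
  case (step J)
  have m: "t J \<le> t (Suc J)" using mono step by auto
  have c: "((\<lambda>q. v J) has_integral (t (Suc J) - t J) * v J) {t J..t (Suc J)}"
    using has_integral_const_real[of "v J" "t J" "t (Suc J)"] m by (simp add: mult.commute)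
  have c2: "(f has_integral (t (Suc J) - t J) * v J) {t J..t (Suc J)}"
    by (rule has_integral_spike_finite[OF _ _ c, of "{t J}"]) (use pc step in auto)
  have "(f has_integral (\<Sum>k\<in>{i..<J}. (t (Suc k) - t k) * v k) + (t (Suc J) - t J) * v J) {t i..t (Suc J)}"
    by (rule has_integral_combine) (use step m c2 in auto)
  then show ?case using step m by simp
qed

lemma tele:
  fixes g :: "nat \<Rightarrow> real"
  shows "m \<le> n \<Longrightarrow> (\<Sum>k\<in>{m..<n}. g k - g (Suc k)) = g m - g n"
  by (induction n rule: dec_induct) auto

locale Q6 =
  fixes l :: nat and mu w :: "nat \<Rightarrow> real" and c :: real
  assumes l1: "l \<ge> 1" and mupos: "\<forall>i\<in>{1..l}. mu i > 0" and cpos: "c > 0"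
    and wdec: "\<forall>i j. 1 \<le> i \<longrightarrow> i < j \<longrightarrow> j \<le> l \<longrightarrow> w j < w i" and wl: "w l \<ge> 0"
begin

abbreviation nn :: "nat \<Rightarrow> real" where "nn \<equiv> nthr mu w c"
abbreviation SS :: "nat \<Rightarrow> real" where "SS k \<equiv> (\<Sum>j\<in>{1..<k}. mu j)"
abbreviation QB :: real where "QB \<equiv> Qbar l mu w c"

lemma mu_pos: "1 \<le> i \<Longrightarrow> i \<le> l \<Longrightarrow> 0 < mu i" using mupos by auto
lemma mu_nn: "1 \<le> i \<Longrightarrow> i \<le> l \<Longrightarrow> 0 \<le> mu i" using mu_pos by (meson less_imp_le)

lemma nthr_step: "nn (Suc i) = nn i + (w i - w (Suc i)) * SS (Suc i) / c"
proof (cases "i = 0")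
  case True then show ?thesis by (simp add: nthr_def)
next
  case False
  have "(\<Sum>j\<in>{1..<Suc i}. (w j - w (Suc i)) * mu j) = (\<Sum>j\<in>{1..<Suc i}. (w j - w i) * mu j + (w i - w (Suc i)) * mu j)"
    by (rule sum.cong) (auto simp: algebra_simps)
  also have "\<dots> = (\<Sum>j\<in>{1..<Suc i}. (w j - w i) * mu j) + (w i - w (Suc i)) * SS (Suc i)"
    by (simp only: sum.distrib sum_distrib_left)
  also have "(\<Sum>j\<in>{1..<Suc i}. (w j - w i) * mu j) = (\<Sum>j\<in>{1..<i}. (w j - w i) * mu j)"
    using False by (simp add: sum.atLeastLessThan_Suc)
  finally show ?thesis using cpos by (simp add: nthr_def field_simps)
qed

lemma S_pos: "1 \<le> k \<Longrightarrow> k \<le> l \<Longrightarrow> SS (Suc k) > 0"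
  by (rule sum_pos) (use mupos in auto)

lemma S_mono: "a \<le> b \<Longrightarrow> b \<le> Suc l \<Longrightarrow> SS a \<le> SS b"
  by (rule sum_mono2) (auto intro!: mu_nn)

lemma S_Suc: "1 \<le> k \<Longrightarrow> SS (Suc k) = SS k + mu k"
  by (simp add: sum.atLeastLessThan_Suc)

lemma n_step_pos: "1 \<le> k \<Longrightarrow> Suc k \<le> l \<Longrightarrow> nn k < nn (Suc k)"
proof -
  assume a: "1 \<le> k" "Suc k \<le> l"
  have "w (Suc k) < w k" using wdec a by auto
  moreover have "SS (Suc k) > 0" using S_pos a by auto
  ultimately have "(w k - w (Suc k)) * SS (Suc k) / c > 0" using cpos by simp
  then show ?thesis using nthr_step[of k] by simp
qed

lemma n_strict: "1 \<le> i \<Longrightarrow> i < j \<Longrightarrow> j \<le> l \<Longrightarrow> nn i < nn j"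
proof (induction j)
  case 0 then show ?case by simp
next
  case (Suc j)
  show ?case
  proof (cases "i = j")
    case True then show ?thesis using n_step_pos Suc by auto
  next
    case False
    then have "nn i < nn j" using Suc by auto
    also have "nn j < nn (Suc j)" using n_step_pos Suc False by auto
    finally show ?thesis .
  qed
qed

lemma n_le: "1 \<le> i \<Longrightarrow> i \<le> j \<Longrightarrow> j \<le> l \<Longrightarrow> nn i \<le> nn j"
  using n_strict by (cases "i = j") (auto intro: less_imp_le)

lemma n1: "nn 1 = 0" by (simp add: nthr_def)

lemma M_eq: "(\<Sum>i\<in>{1..l}. mu i) = SS (Suc l)"
  by (simp add: atLeastLessThanSuc_atLeastAtMost)

lemma Qbar_n_l: "QB - nn l = w l * SS (Suc l) / c"
proof -
  have e1: "(\<Sum>i\<in>{1..l}. w i * mu i) = (\<Sum>i\<in>{1..<l}. w i * mu i) + w l * mu l"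
    using l1 by (simp add: atLeastLessThanSuc_atLeastAtMost[symmetric] sum.atLeastLessThan_Suc)
  have e2: "(\<Sum>j\<in>{1..<l}. (w j - w l) * mu j) = (\<Sum>j\<in>{1..<l}. w j * mu j) - w l * SS l"
    by (simp add: left_diff_distrib sum_subtractf sum_distrib_left)
  have e3: "SS (Suc l) = SS l + mu l" using S_Suc l1 by simp
  show ?thesis unfolding Qbar_def nthr_def e1 e2 e3 using cpos by (simp add: field_simps)
qed

lemma Qbar_ge: "1 \<le> i \<Longrightarrow> i \<le> l \<Longrightarrow> nn i \<le> QB"
proof -
  assume a: "1 \<le> i" "i \<le> l"
  have "0 \<le> w l * SS (Suc l) / c" using wl cpos S_pos[of l] l1 by simp
  then have "nn l \<le> QB" using Qbar_n_l by simp
  then show ?thesis using n_le[of i l] a by simp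
qed

lemma Qbar_gt: "1 \<le> i \<Longrightarrow> i < l \<Longrightarrow> nn i < QB"
  using n_strict[of i l] Qbar_ge[of l] l1 by simp

lemma x_bounds: "steady_profile l mu w lam c Q r x \<Longrightarrow> i \<in> {1..l} \<Longrightarrow> 0 \<le> x i \<and> x i \<le> mu i"
  unfolding steady_profile_def using mupos
  by (cases Q "nn i" rule: linorder_cases) (auto intro: less_imp_le)

lemma r_le: "steady_profile l mu w lam c Q r x \<Longrightarrow> r \<le> SS (Suc l)"
proof -
  assume P: "steady_profile l mu w lam c Q r x"
  have "r = (\<Sum>i\<in>{1..l}. x i)" using P unfolding steady_profile_def by simp
  also have "\<dots> \<le> (\<Sum>i\<in>{1..l}. mu i)" by (rule sum_mono) (use x_bounds P in auto)
  finally show ?thesis using M_eq by simp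
qed

lemma not_gt: "steady_profile l mu w lam c Q r x \<Longrightarrow> Q \<le> QB"
proof (rule ccontr)
  assume P: "steady_profile l mu w lam c Q r x" and "\<not> Q \<le> QB"
  then have g: "Q > QB" by simp
  then have r0: "r = 0" using P unfolding steady_profile_def by simp
  have "Q > nn 1" using g Qbar_ge[of 1] l1 by simp
  then have x1: "x 1 = mu 1" using P l1 unfolding steady_profile_def by auto
  have "x 1 \<le> (\<Sum>i\<in>{1..l}. x i)" by (rule member_le_sum) (use x_bounds P l1 in auto)
  then have "x 1 \<le> r" using P unfolding steady_profile_def by simp
  then show False using x1 r0 mu_pos[of 1] l1 by auto
qed

lemma drift_eq:
  assumes P: "steady_profile l mu w lam c Q r x" and a: "1 \<le> k" "k \<le> l" "nn k < q" "q \<le> Q"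
    "Suc k \<le> l \<longrightarrow> q \<le> nn (Suc k)"
  shows "drift_speed l mu w c x q = SS (Suc k)"
proof -
  have set: "{i\<in>{1..l}. nn i < q} = {1..<Suc k}"
  proof (intro set_eqI iffI)
    fix m assume "m \<in> {i\<in>{1..l}. nn i < q}"
    then have m: "1 \<le> m" "m \<le> l" "nn m < q" by auto
    show "m \<in> {1..<Suc k}"
    proof (rule ccontr)
      assume "m \<notin> {1..<Suc k}" then have "Suc k \<le> m" using m by auto
      then have "nn (Suc k) \<le> nn m" using n_le[of "Suc k" m] m by auto
      with m a \<open>Suc k \<le> m\<close> show False by auto
    qed
  next
    fix m assume "m \<in> {1..<Suc k}"
    then have "1 \<le> m" "m \<le> k" by auto
    then have "nn m \<le> nn k" using n_le a by auto
    then show "m \<in> {i\<in>{1..l}. nn i < q}" using a \<open>1 \<le> m\<close> \<open>m \<le> k\<close> by auto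
  qed
  have xm: "x m = mu m" if "m \<in> {1..<Suc k}" for m
  proof -
    from that have "1 \<le> m" "m \<le> k" by auto
    then have "nn m \<le> nn k" using n_le a by auto
    then have "nn m < Q" using a by linarith
    then show "x m = mu m" using P \<open>1\<le>m\<close> \<open>m\<le>k\<close> a unfolding steady_profile_def by auto
  qed
  show ?thesis unfolding drift_speed_def set by (rule sum.cong) (use xm in auto)
qed

lemma sum_split: "1 \<le> k \<Longrightarrow> k \<le> l \<Longrightarrow>
  (\<Sum>m\<in>{1..l}. y m) = (\<Sum>m\<in>{1..<k}. y m) + y k + (\<Sum>m\<in>{Suc k..<Suc l}. (y m::real))"
proof -
  assume a: "1 \<le> k" "k \<le> l"
  have "(\<Sum>m\<in>{1..l}. y m) = (\<Sum>m\<in>{1..<Suc l}. y m)" by (simp add: atLeastLessThanSuc_atLeastAtMost)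
  also have "\<dots> = (\<Sum>m\<in>{1..<k}. y m) + (\<Sum>m\<in>{k..<Suc l}. y m)"
    using sum.atLeastLessThan_concat[of 1 k "Suc l" y] a by simp
  also have "(\<Sum>m\<in>{k..<Suc l}. y m) = y k + (\<Sum>m\<in>{Suc k..<Suc l}. y m)"
    using sum.atLeast_Suc_lessThan[of k "Suc l" y] a by simp
  finally show ?thesis by simp
qed

end

theorem mainTheorem6:
  fixes l :: nat and mu w :: "nat \<Rightarrow> real" and lam c :: real
  assumes "l \<ge> 1"
    and "\<forall>i\<in>{1..l}. mu i > 0"
    and "lam > 0" and "c > 0"
    and "\<forall>i j. 1 \<le> i \<longrightarrow> i < j \<longrightarrow> j \<le> l \<longrightarrow> w j < w i"
    and "w l \<ge> 0"
  shows
   "(lam > (\<Sum>i\<in>{1..l}. mu i) \<longrightarrow>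
       (\<forall>Q. steady_length l mu w lam c Q \<longleftrightarrow> Q = Qbar l mu w c) \<and>
       (\<exists>r x. steady_profile l mu w lam c (Qbar l mu w c) r x \<and> (\<forall>i\<in>{1..l}. x i = mu i)) \<and>
       (\<forall>r x. steady_profile l mu w lam c (Qbar l mu w c) r x \<longrightarrow>
              all_payoff l mu w lam c (Qbar l mu w c) r x 0))
    \<and>
    (lam \<le> (\<Sum>i\<in>{1..l}. mu i) \<longrightarrow>
       steady_length l mu w lam c (nthr mu w c (jstar l mu lam)) \<and>
       ((\<forall>i\<in>{1..l}. lam \<noteq> (\<Sum>j\<in>{1..i}. mu j)) \<longrightarrow>
          (\<forall>Q. steady_length l mu w lam c Q \<longrightarrow> Q = nthr mu w c (jstar l mu lam))) \<and>
       (\<exists>r x. steady_profile l mu w lam c (nthr mu w c (jstar l mu lam)) r x \<and>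
          (\<forall>i\<in>{1..l}. i < jstar l mu lam \<longrightarrow> x i = mu i) \<and>
          x (jstar l mu lam) = lam - (\<Sum>i\<in>{1..<jstar l mu lam}. mu i) \<and>
          (\<forall>i\<in>{1..l}. jstar l mu lam < i \<longrightarrow> x i = 0)) \<and>
       (\<forall>r x. steady_profile l mu w lam c (nthr mu w c (jstar l mu lam)) r x \<longrightarrow>
              all_payoff l mu w lam c (nthr mu w c (jstar l mu lam)) r x (w (jstar l mu lam))))"
proof -
  interpret Q6 l mu w c using assms by unfold_locales auto
  have M: "(\<Sum>i\<in>{1..l}. mu i) = SS (Suc l)" by (rule M_eq)
  have QB0: "0 \<le> QB" using Qbar_ge[of 1] l1 n1 by simp
  have partA: "(\<forall>Q. steady_length l mu w lam c Q \<longleftrightarrow> Q = QB) \<and>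
       (\<exists>r x. steady_profile l mu w lam c QB r x \<and> (\<forall>i\<in>{1..l}. x i = mu i)) \<and>
       (\<forall>r x. steady_profile l mu w lam c QB r x \<longrightarrow> all_payoff l mu w lam c QB r x 0)"
    if lamM: "lam > SS (Suc l)"
  proof -
    have prof: "steady_profile l mu w lam c QB (SS (Suc l)) mu"
      unfolding steady_profile_def using QB0 Qbar_ge lamM M mu_nn S_pos[of l] l1
      by (auto simp: not_less[symmetric])
    have uniq: "Q = QB" if P: "steady_profile l mu w lam c Q r x" for Q r x
    proof -
      have "Q \<le> QB" using not_gt P by blast
      moreover have "\<not> Q < QB"
      proof
        assume "Q < QB" then have "r = lam" using P unfolding steady_profile_def by simp
        then show False using r_le[OF P] lamM by simp
      qed
      ultimately show ?thesis by simp
    qed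
    have pay: "all_payoff l mu w lam c QB r x 0" if P: "steady_profile l mu w lam c QB r x" for r x
    proof -
      have "r < lam" using r_le[OF P] lamM by simp
      have "w i - c * travel_time l mu w c x QB (nn i) = 0" if i: "i \<in> {1..l}" for i
      proof -
        define t where "t k = (if k \<le> l then nn k else QB)" for k
        define g where "g k = (if k \<le> l then w k else 0)" for k
        define f where "f q = 1 / drift_speed l mu w c x q" for q
        have mono: "\<forall>k. i \<le> k \<longrightarrow> k < Suc l \<longrightarrow> t k \<le> t (Suc k)"
        proof (intro allI impI)
          fix k assume k: "i \<le> k" "k < Suc l"
          show "t k \<le> t (Suc k)"
          proof (cases "Suc k \<le> l")
            case True then show ?thesis unfolding t_def using n_le[of k "Suc k"] k i by auto
          next
            case False then have "k = l" using k by simp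
            then show ?thesis unfolding t_def using Qbar_ge[of l] l1 by simp
          qed
        qed
        have tle: "t (Suc k) \<le> QB" for k
          unfolding t_def using Qbar_ge[of "Suc k"] by auto
        have pc: "\<forall>k q. i \<le> k \<longrightarrow> k < Suc l \<longrightarrow> t k < q \<longrightarrow> q \<le> t (Suc k) \<longrightarrow> f q = 1 / SS (Suc k)"
        proof (intro allI impI)
          fix k q assume k: "i \<le> k" "k < Suc l" "t k < q" "q \<le> t (Suc k)"
          have "drift_speed l mu w c x q = SS (Suc k)"
            by (rule drift_eq[OF P]) (use k i tle[of k] in \<open>auto simp: t_def split: if_splits\<close>)
          then show "f q = 1 / SS (Suc k)" unfolding f_def by simp
        qed
        have I: "(f has_integral (\<Sum>k\<in>{i..<Suc l}. (t (Suc k) - t k) * (1 / SS (Suc k)))) {t i..t (Suc l)}"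
          using piecewise_integral[OF _ mono pc] i by simp
        have ti: "t i = nn i" "t (Suc l) = QB" using i unfolding t_def by auto
        have "(\<Sum>k\<in>{i..<Suc l}. (t (Suc k) - t k) * (1 / SS (Suc k))) = (\<Sum>k\<in>{i..<Suc l}. (g k - g (Suc k)) / c)"
        proof (rule sum.cong[OF refl])
          fix k assume k: "k \<in> {i..<Suc l}"
          have Sp: "SS (Suc k) > 0" using S_pos[of k] k i by auto
          show "(t (Suc k) - t k) * (1 / SS (Suc k)) = (g k - g (Suc k)) / c"
          proof (cases "Suc k \<le> l")
            case True
            then show ?thesis unfolding t_def g_def using nthr_step[of k] Sp k cpos by (simp add: field_simps)
          next
            case False then have "k = l" using k by simp
            then show ?thesis unfolding t_def g_def using Qbar_n_l Sp cpos by (simp add: field_simps)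
          qed
        qed
        also have "\<dots> = (g i - g (Suc l)) / c"
          using tele[of i "Suc l" g] i by (simp add: sum_divide_distrib[symmetric])
        also have "\<dots> = w i / c" using i unfolding g_def by simp
        finally have eq: "(\<Sum>k\<in>{i..<Suc l}. (t (Suc k) - t k) * (1 / SS (Suc k))) = w i / c" .
        have fd: "(\<lambda>q. 1 / drift_speed l mu w c x q) = f" by (simp add: f_def fun_eq_iff)
        have "integral {t i..t (Suc l)} f = w i / c" using integral_unique[OF I] eq by simp
        then have "travel_time l mu w c x QB (nn i) = w i / c"
          unfolding travel_time_def fd ti(1)[symmetric] ti(2)[symmetric] .
        then show ?thesis using cpos by simp
      qed
      then show ?thesis unfolding all_payoff_def by auto
    qed
    show ?thesis
    proof (intro conjI allI impI)
      fix Q show "steady_length l mu w lam c Q \<longleftrightarrow> Q = QB"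
      proof
        assume "steady_length l mu w lam c Q"
        then obtain r x where "steady_profile l mu w lam c Q r x" unfolding steady_length_def by blast
        then show "Q = QB" by (rule uniq)
      next
        assume "Q = QB" then show "steady_length l mu w lam c Q"
          unfolding steady_length_def using prof by blast
      qed
    next
      show "\<exists>r x. steady_profile l mu w lam c QB r x \<and> (\<forall>i\<in>{1..l}. x i = mu i)" using prof by auto
    next
      fix r x assume "steady_profile l mu w lam c QB r x"
      then show "all_payoff l mu w lam c QB r x 0" using pay by blast
    qed
  qed
  define j where "j = jstar l mu lam"
  have partB: "steady_length l mu w lam c (nn j) \<and>
       ((\<forall>i\<in>{1..l}. lam \<noteq> (\<Sum>j\<in>{1..i}. mu j)) \<longrightarrow>
          (\<forall>Q. steady_length l mu w lam c Q \<longrightarrow> Q = nn j)) \<and>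
       (\<exists>r x. steady_profile l mu w lam c (nn j) r x \<and>
          (\<forall>i\<in>{1..l}. i < j \<longrightarrow> x i = mu i) \<and>
          x j = lam - (\<Sum>i\<in>{1..<j}. mu i) \<and>
          (\<forall>i\<in>{1..l}. j < i \<longrightarrow> x i = 0)) \<and>
       (\<forall>r x. steady_profile l mu w lam c (nn j) r x \<longrightarrow>
              all_payoff l mu w lam c (nn j) r x (w j))"
    if lamM: "lam \<le> SS (Suc l)"
  proof -
    define A where "A = {i\<in>{1..l}. lam > SS i}"
    have finA: "finite A" unfolding A_def by auto
    have A1: "1 \<in> A" unfolding A_def using l1 assms(3) by simp
    have jA: "jstar l mu lam = Max A" unfolding jstar_def A_def by simp
    have jinA: "j \<in> A" unfolding j_def jA using Max_in finA A1 by auto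
    have j1: "1 \<le> j" "j \<le> l" "SS j < lam" using jinA unfolding A_def by auto
    have j2: "lam \<le> SS (Suc j)"
    proof (cases "j < l")
      case True
      have "Suc j \<notin> A"
      proof
        assume "Suc j \<in> A" then have "Suc j \<le> Max A" using finA by simp
        then show False unfolding jA[symmetric] j_def[symmetric] by simp
      qed
      then show ?thesis unfolding A_def using True by auto
    next
      case False then have "j = l" using j1 by simp
      then show ?thesis using lamM by simp
    qed
    have jchar: "j = k" if k: "1 \<le> k" "k \<le> l" "SS k < lam" "k < l \<longrightarrow> lam \<le> SS (Suc k)" for k
    proof -
      have "Max A = k"
      proof (rule Max_eqI[OF finA])
        fix y assume y: "y \<in> A"
        show "y \<le> k"
        proof (rule ccontr)
          assume "\<not> y \<le> k"
          then have "Suc k \<le> y" "k < l" using y unfolding A_def by auto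
          have "y \<le> l" using y unfolding A_def by auto
          have "SS (Suc k) \<le> SS y" by (rule S_mono) (use \<open>Suc k \<le> y\<close> \<open>y \<le> l\<close> in auto)
          then show False using y k \<open>k < l\<close> unfolding A_def by auto
        qed
      next
        show "k \<in> A" unfolding A_def using k by auto
      qed
      then show ?thesis unfolding j_def jA by simp
    qed
    define x0 where "x0 m = (if m < j then mu m else if m = j then lam - SS j else 0)" for m
    have nj_QB: "nn j \<le> QB" using Qbar_ge j1 by simp
    have prof0: "steady_profile l mu w lam c (nn j) lam x0"
    proof -
      have sumx: "(\<Sum>m\<in>{1..l}. x0 m) = lam"
      proof -
        have "(\<Sum>m\<in>{1..<j}. x0 m) = SS j" by (rule sum.cong) (auto simp: x0_def)
        moreover have "(\<Sum>m\<in>{Suc j..<Suc l}. x0 m) = 0" by (rule sum.neutral) (auto simp: x0_def)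
        ultimately show ?thesis using sum_split[OF j1(1,2), of x0] by (simp add: x0_def)
      qed
      have xm: "(nn j < nn m \<longrightarrow> x0 m = 0) \<and> (nn j > nn m \<longrightarrow> x0 m = mu m) \<and>
          (nn j = nn m \<longrightarrow> 0 \<le> x0 m \<and> x0 m \<le> mu m)" if m: "m \<in> {1..l}" for m
      proof (cases m j rule: linorder_cases)
        case less then have "nn m < nn j" using n_strict m j1 by auto
        then show ?thesis using less by (auto simp: x0_def)
      next
        case equal then show ?thesis using j1 j2 S_Suc[of j] by (auto simp: x0_def)
      next
        case greater then have "nn j < nn m" using n_strict m j1 by auto
        then show ?thesis using greater by (auto simp: x0_def)
      qed
      show ?thesis unfolding steady_profile_def using sumx xm nj_QB n_le[of 1 j] n1 j1 assms(3)
        by auto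
    qed
    have uniq: "Q = nn j" if H: "\<forall>i\<in>{1..l}. lam \<noteq> (\<Sum>j\<in>{1..i}. mu j)"
        and P: "steady_profile l mu w lam c Q r x" for Q r x
    proof -
      have HS: "lam \<noteq> SS (Suc k)" if "1 \<le> k" "k \<le> l" for k
        using H that by (auto simp: atLeastLessThanSuc_atLeastAtMost)
      have HS2: "lam \<noteq> SS k" if "1 \<le> k" "k \<le> l" for k
      proof (cases "k = 1")
        case True then show ?thesis using assms(3) by simp
      next
        case False then have e: "Suc (k - 1) = k" using that by simp
        have "1 \<le> k - 1" "k - 1 \<le> l" using that False by auto
        then have "lam \<noteq> SS (Suc (k - 1))" by (rule HS)
        then show ?thesis unfolding e .
      qed
      have QleB: "Q \<le> QB" using not_gt P by blast
      have Q0: "0 \<le> Q" using P unfolding steady_profile_def by simp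
      define K where "K = {m\<in>{1..l}. nn m \<le> Q}"
      have finK: "finite K" unfolding K_def by auto
      have K1: "1 \<in> K" unfolding K_def using l1 n1 Q0 by simp
      define k where "k = Max K"
      have kK: "k \<in> K" unfolding k_def using Max_in finK K1 by auto
      have k1: "1 \<le> k" "k \<le> l" "nn k \<le> Q" using kK unfolding K_def by auto
      have above: "Q < nn m" if "m \<in> {1..l}" "k < m" for m
      proof (rule ccontr)
        assume "\<not> Q < nn m" then have "m \<in> K" using that unfolding K_def by auto
        then have "m \<le> k" unfolding k_def using finK by simp
        then show False using that by simp
      qed
      have rsum: "r = SS k + x k"
      proof -
        have "r = (\<Sum>m\<in>{1..l}. x m)" using P unfolding steady_profile_def by simp
        also have "\<dots> = (\<Sum>m\<in>{1..<k}. x m) + x k + (\<Sum>m\<in>{Suc k..<Suc l}. x m)"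
          by (rule sum_split[OF k1(1,2)])
        also have "(\<Sum>m\<in>{1..<k}. x m) = SS k"
        proof (rule sum.cong[OF refl])
          fix m assume m: "m \<in> {1..<k}"
          then have "nn m < nn k" using n_strict k1 by auto
          then show "x m = mu m" using P m k1 unfolding steady_profile_def by auto
        qed
        also have "(\<Sum>m\<in>{Suc k..<Suc l}. x m) = 0"
        proof (rule sum.neutral, rule ballI)
          fix m assume m: "m \<in> {Suc k..<Suc l}"
          then have "Q < nn m" using above by auto
          then show "x m = 0" using P m k1 unfolding steady_profile_def by auto
        qed
        finally show ?thesis by simp
      qed
      have kl: "k = l" if "Q = QB"
      proof (rule ccontr)
        assume "k \<noteq> l" then have "k < l" using k1 by simp
        then have "Q < nn (Suc k)" using above by auto
        moreover have "nn (Suc k) \<le> QB" using Qbar_ge \<open>k < l\<close> by simp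
        ultimately show False using that by simp
      qed
      show ?thesis
      proof (cases "nn k < Q")
        case True
        then have "x k = mu k" using P k1 unfolding steady_profile_def by auto
        then have r: "r = SS (Suc k)" using rsum S_Suc k1 by simp
        show ?thesis
        proof (cases "Q < QB")
          case True
          then have "r = lam" using P unfolding steady_profile_def by simp
          then show ?thesis using r HS k1 by auto
        next
          case False then have QQ: "Q = QB" using QleB by simp
          then have "r \<le> lam" using P unfolding steady_profile_def by simp
          then have "lam = SS (Suc l)" using r kl[OF QQ] lamM by simp
          then show ?thesis using HS[of l] l1 by simp
        qed
      next
        case False
        then have Qk: "Q = nn k" using k1 by simp
        then have xk: "0 \<le> x k" "x k \<le> mu k" using P k1 unfolding steady_profile_def by auto
        have SSk: "SS (Suc k) = SS k + mu k" using S_Suc k1 by simp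
        show ?thesis
        proof (cases "Q < QB")
          case True
          then have "r = lam" using P unfolding steady_profile_def by simp
          then have "SS k < lam" "lam < SS (Suc k)"
            using rsum xk SSk HS[OF k1(1,2)] HS2[OF k1(1,2)] by (auto simp: less_le)
          then have "j = k" using jchar k1 by simp
          then show ?thesis using Qk by simp
        next
          case False then have QQ: "Q = QB" using QleB by simp
          then have "r \<le> lam" using P unfolding steady_profile_def by simp
          then have "SS k < lam" using rsum xk HS2[OF k1(1,2)] by (auto simp: less_le)
          then have "j = k" using jchar k1 kl[OF QQ] by simp
          then show ?thesis using Qk by simp
        qed
      qed
    qed
    have pay: "all_payoff l mu w lam c (nn j) r x (w j)" if P: "steady_profile l mu w lam c (nn j) r x" for r x
    proof -
      have part1: "w i - c * travel_time l mu w c x (nn j) (nn i) = w j" if i: "i \<in> {1..l}" "0 < x i" for i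
      proof -
        have "\<not> nn j < nn i"
        proof
          assume "nn j < nn i" then have "x i = 0" using P i unfolding steady_profile_def by auto
          then show False using i by simp
        qed
        then have ij: "i \<le> j" using n_strict[of j i] i(1) j1 by (auto simp: not_le[symmetric])
        define f where "f q = 1 / drift_speed l mu w c x q" for q
        have mono: "\<forall>k. i \<le> k \<longrightarrow> k < j \<longrightarrow> nn k \<le> nn (Suc k)"
          using n_le i j1 by auto
        have pc: "\<forall>k q. i \<le> k \<longrightarrow> k < j \<longrightarrow> nn k < q \<longrightarrow> q \<le> nn (Suc k) \<longrightarrow> f q = 1 / SS (Suc k)"
        proof (intro allI impI)
          fix k q assume k: "i \<le> k" "k < j" "nn k < q" "q \<le> nn (Suc k)"
          have "nn (Suc k) \<le> nn j" using n_le[of "Suc k" j] k j1 by simp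
          then have "drift_speed l mu w c x q = SS (Suc k)"
            by (intro drift_eq[OF P]) (use k i j1 in auto)
          then show "f q = 1 / SS (Suc k)" unfolding f_def by simp
        qed
        have I: "(f has_integral (\<Sum>k\<in>{i..<j}. (nn (Suc k) - nn k) * (1 / SS (Suc k)))) {nn i..nn j}"
          using piecewise_integral[OF ij mono pc] by simp
        have "(\<Sum>k\<in>{i..<j}. (nn (Suc k) - nn k) * (1 / SS (Suc k))) = (\<Sum>k\<in>{i..<j}. (w k - w (Suc k)) / c)"
        proof (rule sum.cong[OF refl])
          fix k assume k: "k \<in> {i..<j}"
          have Sp: "SS (Suc k) > 0" using S_pos[of k] k i j1 by auto
          show "(nn (Suc k) - nn k) * (1 / SS (Suc k)) = (w k - w (Suc k)) / c"
            using nthr_step[of k] Sp cpos by (simp add: field_simps)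
        qed
        also have "\<dots> = (w i - w j) / c"
          using tele[of i j w] ij by (simp add: sum_divide_distrib[symmetric])
        finally have eq: "(\<Sum>k\<in>{i..<j}. (nn (Suc k) - nn k) * (1 / SS (Suc k))) = (w i - w j) / c" .
        have fd: "(\<lambda>q. 1 / drift_speed l mu w c x q) = f" by (simp add: f_def fun_eq_iff)
        have "integral {nn i..nn j} f = (w i - w j) / c" using integral_unique[OF I] eq by simp
        then have "travel_time l mu w c x (nn j) (nn i) = (w i - w j) / c"
          unfolding travel_time_def fd .
        then show ?thesis using cpos by simp
      qed
      have part2: "w j = 0" if "r < lam"
      proof -
        have "\<not> nn j < QB"
        proof
          assume "nn j < QB" then have "r = lam" using P unfolding steady_profile_def by simp
          then show False using that by simp
        qed
        then have e: "nn j = QB" using nj_QB by simp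
        have "j = l"
        proof (rule ccontr)
          assume "j \<noteq> l" then have "j < l" using j1 by simp
          then show False using Qbar_gt[of j] j1 e by simp
        qed
        then have "w l * SS (Suc l) / c = 0" using Qbar_n_l e by simp
        then show ?thesis using \<open>j = l\<close> S_pos[of l] l1 cpos by simp
      qed
      show ?thesis unfolding all_payoff_def using part1 part2 by auto
    qed
    show ?thesis
    proof (intro conjI allI impI)
      show "steady_length l mu w lam c (nn j)" unfolding steady_length_def using prof0 by blast
    next
      fix Q assume H: "\<forall>i\<in>{1..l}. lam \<noteq> (\<Sum>j\<in>{1..i}. mu j)" and "steady_length l mu w lam c Q"
      then show "Q = nn j" using uniq unfolding steady_length_def by blast
    next
      show "\<exists>r x. steady_profile l mu w lam c (nn j) r x \<and>
          (\<forall>i\<in>{1..l}. i < j \<longrightarrow> x i = mu i) \<and>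
          x j = lam - (\<Sum>i\<in>{1..<j}. mu i) \<and>
          (\<forall>i\<in>{1..l}. j < i \<longrightarrow> x i = 0)"
        by (rule exI[of _ lam], rule exI[of _ x0]) (use prof0 in \<open>auto simp: x0_def\<close>)
    next
      fix r x assume "steady_profile l mu w lam c (nn j) r x"
      then show "all_payoff l mu w lam c (nn j) r x (w j)" using pay by blast
    qed
  qed
  show ?thesis using partA partB M unfolding j_def by auto
qed

end
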